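(* Let $M,K\ge1$, $\mathbf{H}=[\mathbf{h}_{:1},\dots,\mathbf{h}_{:K}]\in\mathbb{C}^{M\times K}$, $P>0$, $N_0>0$, and suppose all users transmit at the same rate, $r_k=r_G$ for all $k\in\{1,\dots,K\}$. Consider the successive interference cancellation (SIC) decoding order $i_1\to i_2\to\cdots\to i_K$ constructed greedily as follows: for $u=1,\dots,K$, with $U_u=\{1,\dots,K\}\setminus\{i_1,\dots,i_{u-1}\}$ the set of not-yet-decoded users, choose $i_u\in U_u$ maximizing the signal-to-interference-plus-noise rate $R_{k}^{U_u\setminus\{k\}}$ over $k\in U_u$ (i.e., decode the user with the highest SINR at each step). Then this decoding order maximizes $|S^*_{\mathrm{SIC}}|$ over all permutations of $\{1,\dots,K\}$.
   Context: For a set $A\subseteq\{1,\dots,K\}$, $\mathbf{H}_{:A}$ is the submatrix of $\mathbf{H}$ with columns $\{\mathbf{h}_{:k}:k\in A\}$ (zero contribution if $A=\emptyset$); $\mathrm H$ denotes conjugate transpose. For a user $x$ and set $Y$, $R_x^{Y}=\log_2\det\big(\mathbf{I}_M+\frac{P}{N_0}\mathbf{h}_{:x}\mathbf{h}_{:x}^{\mathrm H}(\mathbf{I}_M+\frac{P}{N_0}\mathbf{H}_{:Y}\mathbf{H}_{:Y}^{\mathrm H})^{-1}\big)$. For a decoding order (permutation) $i_1\to\cdots\to i_K$, let $T_u=\{i_k:k>u\}$ and define $S^*_{\mathrm{SIC}}=\{i_1,\dots,i_{u^*-1}\}$ where $u^*$ is the smallest $u\in\{1,\dots,K\}$ with $r_{i_u}>R_{i_u}^{T_u}$,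 and $u^*=K+1$ if no such $u$ exists. Thus $S^*_{\mathrm{SIC}}$ is the set of users successfully decoded by SIC in that order before the first failure. The setting is a Gaussian multiple-access channel $\mathbf{y}=\mathbf{H}\mathbf{x}+\mathbf{z}$ with $K$ single-antenna transmitters of power $P$, an $M$-antenna receiver, and noise $\mathcal{CN}(0,N_0\mathbf{I}_M)$. *)

theory Defs
  imports "HOL-Analysis.Analysis"
begin

text \<open>Channel matrix H :: complex^'k^'m  (M = CARD('m) receive antennas as rows,
  K = CARD('k) users as columns).  Column k of H is h_{:k}.\<close>

definition chan_col :: "complex^'k^'m \<Rightarrow> 'k \<Rightarrow> complex^'m" where
  "chan_col H k = (\<chi> i. H $ i $ k)"

definition outer_H :: "complex^'m \<Rightarrow> complex^'m^'m" where
  "outer_H v = (\<chi> i j. v $ i * cnj (v $ j))"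

definition gram_sub :: "complex^'k^'m \<Rightarrow> 'k set \<Rightarrow> complex^'m^'m" where
  "gram_sub H Y = (\<Sum>k\<in>Y. outer_H (chan_col H k))"

text \<open>R_x^Y = log2 det(I + (P/N0) h_x h_x^H (I + (P/N0) H_Y H_Y^H)^{-1}).
  The determinant is a positive real number; we take its real part.\<close>
definition rate :: "real \<Rightarrow> real \<Rightarrow> complex^'k^'m \<Rightarrow> 'k \<Rightarrow> 'k set \<Rightarrow> real" where
  "rate P N0 H x Y =
     log 2 (Re (det (mat 1 + (P / N0) *\<^sub>R
        (outer_H (chan_col H x) ** matrix_inv (mat 1 + (P / N0) *\<^sub>R gram_sub H Y)))))"

fun sic_decoded :: "('k \<Rightarrow> real) \<Rightarrow> ('k \<Rightarrow> 'k set \<Rightarrow> real) \<Rightarrow> 'k list \<Rightarrow> 'k list" where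
  "sic_decoded r R [] = []"
| "sic_decoded r R (x # xs) =
     (if r x \<le> R x (set xs) then x # sic_decoded r R xs else [])"

definition S_SIC :: "('k \<Rightarrow> real) \<Rightarrow> ('k \<Rightarrow> 'k set \<Rightarrow> real) \<Rightarrow> 'k list \<Rightarrow> 'k set" where
  "S_SIC r R ord = set (sic_decoded r R ord)"

definition is_order :: "'k::finite list \<Rightarrow> bool" where
  "is_order ord \<longleftrightarrow> distinct ord \<and> set ord = UNIV"

definition greedy_order :: "('k \<Rightarrow> 'k set \<Rightarrow> real) \<Rightarrow> 'k::finite list \<Rightarrow> bool" where
  "greedy_order R ord \<longleftrightarrow> is_order ord \<and>
     (\<forall>u < length ord. \<forall>k \<in> UNIV - set (take u ord).
        R k (UNIV - set (take u ord) - {k}) \<le>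
        R (ord ! u) (UNIV - set (take u ord) - {ord ! u}))"

end

theory Submission
  imports Defs
begin


lemma det_base:
  fixes w :: "'a::field^'n"
  shows "det (\<chi> i. if i = z then w else axis i (1::'a)) = w $ z"
proof -
  have 1: "det (\<chi> i j. if j = z then (mat 1 *v w) $ i else (mat 1 :: 'a^'n^'n) $ i $ j) = w $ z * det (mat 1 :: 'a^'n^'n)"
    by (rule cramer_lemma)
  have 2: "transpose (\<chi> i j. if j = z then (mat 1 *v w) $ i else (mat 1 :: 'a^'n^'n) $ i $ j)
     = (\<chi> i. if i = z then w else axis i (1::'a))"
  proof -
    show ?thesis unfolding matrix_vector_mul_lid
      by (simp add: vec_eq_iff transpose_def mat_def axis_def)
  qed
  show ?thesis unfolding 2[symmetric] det_transpose 1 by simp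
qed

lemma det_L1:
  fixes w u :: "'a::field^'n"
  assumes "finite T" "z \<notin> T"
  shows "det (\<chi> i. if i = z then w else if i \<in> T then axis i 1 + u$i *s w else axis i (1::'a)) = w $ z"
  using assms
proof (induction T rule: finite_induct)
  case empty
  have "(\<chi> i. if i = z then w else if i \<in> {} then axis i 1 + u$i *s w else axis i (1::'a)) = (\<chi> i. if i = z then w else axis i 1)"
    by (simp add: vec_eq_iff)
  then show ?case using det_base[of z w] by simp
next
  case (insert y T)
  have yz: "y \<noteq> z" using insert by auto
  define c where "c = (\<lambda>i. if i = z then w else if i \<in> T then axis i 1 + u$i *s w else axis i (1::'a))"
  have eq: "(\<chi> i. if i = z then w else if i \<in> insert y T then axis i 1 + u$i *s w else axis i (1::'a))
    = (\<chi> i. if i = y then axis i 1 + u$i *s w else c i)"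
    using yz by (simp add: vec_eq_iff c_def)
  have e1: "(\<chi> i. if i = y then axis i 1 else c i) = (\<chi> i. c i)"
    using insert yz by (simp add: vec_eq_iff c_def)
  have e2: "(\<chi> i. if i = y then u$i *s w else c i) = (\<chi> i. if i = y then u$y *s w else c i)"
    by (simp add: vec_eq_iff)
  have z0: "det ((\<chi> i. if i = y then w else c i) :: 'a^'n^'n) = 0"
    by (rule det_identical_rows[OF yz]) (simp add: row_def c_def vec_eq_iff yz)
  show ?case
    unfolding eq det_row_add e1 e2 det_row_mul z0
    using insert by (simp add: c_def)
qed

lemma det_L2:
  fixes w u :: "'a::field^'n"
  assumes "finite T"
  shows "det (\<chi> i. if i \<in> T then axis i 1 + u$i *s w else axis i (1::'a)) = 1 + (\<Sum>i\<in>T. u$i * w$i)"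
  using assms
proof (induction T rule: finite_induct)
  case empty
  have "(\<chi> i. axis i (1::'a)) = (mat 1 :: 'a^'n^'n)"
    by (simp add: vec_eq_iff mat_def axis_def)
  then show ?case by simp
next
  case (insert z T)
  define c where "c = (\<lambda>i. if i \<in> T then axis i 1 + u$i *s w else axis i (1::'a))"
  have eq: "(\<chi> i. if i \<in> insert z T then axis i 1 + u$i *s w else axis i (1::'a))
    = (\<chi> i. if i = z then axis i 1 + u$i *s w else c i)"
    by (simp add: vec_eq_iff c_def)
  have e1: "(\<chi> i. if i = z then axis i 1 else c i) = (\<chi> i. c i)"
    using insert by (simp add: vec_eq_iff c_def)
  have e2: "(\<chi> i. if i = z then u$i *s w else c i) = (\<chi> i. if i = z then u$z *s w else c i)"
    by (simp add: vec_eq_iff)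
  have L: "det ((\<chi> i. if i = z then w else c i) :: 'a^'n^'n) = w $ z"
  proof -
    have "(\<chi> i. if i = z then w else c i) = (\<chi> i. if i = z then w else if i \<in> T then axis i 1 + u$i *s w else axis i (1::'a))"
      by (simp add: vec_eq_iff c_def)
    then show ?thesis using det_L1[OF insert(1,2), of w u] by simp
  qed
  show ?case
    unfolding eq det_row_add e1 e2 det_row_mul L
    using insert by (simp add: c_def algebra_simps)
qed

lemma det_rank1:
  fixes w u :: "'a::field^'n"
  shows "det ((\<chi> i j. (if i = j then 1 else 0) + u$i * w$j) :: 'a^'n^'n) = 1 + (\<Sum>i\<in>UNIV. u$i * w$i)"
proof -
  have "(\<chi> i j. (if i = j then 1 else 0) + u$i * w$j) = (\<chi> i. if i \<in> UNIV then axis i 1 + u$i *s w else axis i (1::'a))"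
    by (simp add: vec_eq_iff axis_def)
  then show ?thesis using det_L2[of UNIV u w] by simp
qed



definition ip :: "complex^'n \<Rightarrow> complex^'n \<Rightarrow> complex" where
  "ip x y = (\<Sum>i\<in>UNIV. cnj (x$i) * y$i)"

definition herm :: "complex^'n^'n \<Rightarrow> bool" where
  "herm A \<longleftrightarrow> (\<forall>i j. A$i$j = cnj (A$j$i))"

lemma herm_cnj: "herm A \<Longrightarrow> cnj (A$j$i) = A$i$j"
  unfolding herm_def by (metis complex_cnj_cnj)

lemma ip_add_right: "ip x (y + z) = ip x y + ip x z"
  by (simp add: ip_def algebra_simps sum.distrib)
lemma ip_diff_right: "ip x (y - z) = ip x y - ip x z"
  by (simp add: ip_def algebra_simps sum_subtractf)
lemma ip_diff_left: "ip (x - y) z = ip x z - ip y z"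
  by (simp add: ip_def algebra_simps sum_subtractf)
lemma ip_scaleR_right: "ip x (c *\<^sub>R y) = of_real c * ip x y"
  apply (simp add: ip_def)
  apply (simp add: sum_distrib_left scaleR_conv_of_real mult_ac)
  done

lemma ip_self_Re: "Re (ip x x) = (\<Sum>i\<in>UNIV. (cmod (x$i))^2)"
proof -
  have "Re (cnj z * z) = (cmod z)^2" for z
    using cmod_power2[of z] by (simp add: power2_eq_square)
  then show ?thesis by (simp add: ip_def Re_sum)
qed

lemma ip_self_nonneg: "Re (ip x x) \<ge> 0"
  unfolding ip_self_Re by (simp add: sum_nonneg)

lemma ip_self_zero: "Re (ip x x) = 0 \<Longrightarrow> x = 0"
  unfolding ip_self_Re
  by (subst (asm) sum_nonneg_eq_0_iff) (auto simp: vec_eq_iff)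

lemma herm_ip: "herm A \<Longrightarrow> ip x (A *v y) = ip (A *v x) y"
proof -
  assume h: "herm A"
  have "ip x (A *v y) = (\<Sum>i\<in>UNIV. \<Sum>j\<in>UNIV. cnj (x$i) * A$i$j * y$j)"
    by (simp add: ip_def matrix_vector_mult_def sum_distrib_left mult_ac)
  also have "\<dots> = (\<Sum>j\<in>UNIV. \<Sum>i\<in>UNIV. cnj (x$i) * A$i$j * y$j)"
    by (rule sum.swap)
  also have "\<dots> = ip (A *v x) y"
    using herm_cnj[OF h] by (simp add: ip_def matrix_vector_mult_def sum_distrib_right sum_distrib_left mult_ac)
  finally show ?thesis .
qed

lemma outer_mult: "outer_H g *v x = ip g x *s g"
  by (simp add: vec_eq_iff outer_H_def ip_def matrix_vector_mult_def sum_distrib_left mult_ac)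

lemma sum_mat_mult: "(\<Sum>k\<in>Y. M k) *v x = (\<Sum>k\<in>Y. M k *v x)"
  by (simp add: vec_eq_iff matrix_vector_mult_def sum_component sum_distrib_right)
     (intro allI sum.swap)

lemma gram_mult: "gram_sub H Y *v x = (\<Sum>k\<in>Y. ip (chan_col H k) x *s chan_col H k)"
  unfolding gram_sub_def sum_mat_mult outer_mult ..

lemma ip_sum_right: "ip x (\<Sum>k\<in>Y. f k) = (\<Sum>k\<in>Y. ip x (f k))"
  by (simp add: ip_def sum_component sum_distrib_left) (rule sum.swap)

lemma ip_smult_right: "ip x (c *s y) = c * ip x y"
  by (simp add: ip_def sum_distrib_left mult_ac)

lemma ip_swap: "ip x y = cnj (ip y x)"
  by (simp add: ip_def mult.commute)

lemma gram_psd: "Re (ip x (gram_sub H Y *v x)) \<ge> 0"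
proof -
  have "ip x (gram_sub H Y *v x) = (\<Sum>k\<in>Y. ip (chan_col H k) x * cnj (ip (chan_col H k) x))"
    unfolding gram_mult ip_sum_right ip_smult_right by (metis ip_swap)
  then show ?thesis
    by (simp add: Re_sum complex_mult_cnj sum_nonneg)
qed

lemma gram_herm: "herm (gram_sub H Y)"
  by (simp add: herm_def gram_sub_def sum_component outer_H_def mult.commute)

lemma herm_A: "herm (mat 1 + c *\<^sub>R gram_sub H Y)"
  using herm_cnj[OF gram_herm[of H Y]] unfolding herm_def by (simp add: mat_def)

lemma scaleR_mv: "(c *\<^sub>R A) *v (v::complex^'n) = c *\<^sub>R (A *v v)"
  by (simp add: vec_eq_iff matrix_vector_mult_def scaleR_sum_right)

lemma A_mult: "(mat 1 + c *\<^sub>R gram_sub H Y) *v x = x + c *\<^sub>R (gram_sub H Y *v x)"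
  by (simp add: matrix_vector_mult_add_rdistrib scaleR_mv)

lemma A_psd:
  assumes "c \<ge> 0"
  shows "Re (ip x ((mat 1 + c *\<^sub>R gram_sub H Y) *v x)) \<ge> Re (ip x x)"
  using gram_psd[of x H Y] assms
  by (simp add: A_mult ip_add_right ip_scaleR_right)

lemma A_invertible:
  assumes "c \<ge> 0"
  shows "invertible (mat 1 + c *\<^sub>R gram_sub H Y)"
proof -
  let ?A = "mat 1 + c *\<^sub>R gram_sub H Y"
  have "inj ((*v) ?A)"
  proof (rule injI)
    fix x y assume "?A *v x = ?A *v y"
    then have "?A *v (x - y) = 0" by (simp add: matrix_vector_mult_diff_distrib)
    then have "Re (ip (x - y) (?A *v (x - y))) = 0" by (simp add: ip_def)
    then have "Re (ip (x - y) (x - y)) = 0"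
      using A_psd[OF assms, of "x - y" H Y] ip_self_nonneg[of "x - y"] by linarith
    then show "x = y" using ip_self_zero by fastforce
  qed
  then have "det (matrix ((*v) ?A)) \<noteq> 0"
    using det_nz_iff_inj_gen[OF matrix_vector_mul_linear_gen] by blast
  then show ?thesis by (simp add: invertible_det_nz)
qed

lemma A_inv:
  assumes "c \<ge> 0"
  shows "(mat 1 + c *\<^sub>R gram_sub H Y) ** matrix_inv (mat 1 + c *\<^sub>R gram_sub H Y) = mat 1"
  using A_invertible[OF assms, of H Y] unfolding invertible_def matrix_inv_def
  by (metis (mono_tags, lifting) someI_ex)



lemma det_formula:
  fixes B :: "complex^'m^'m"
  shows "det (mat 1 + c *\<^sub>R (outer_H h ** B)) = 1 + of_real c * ip h (B *v h)"
proof -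
  define u where "u = (\<chi> i. of_real c * h$i)"
  define w where "w = (\<chi> j. \<Sum>k\<in>UNIV. cnj (h$k) * B$k$j)"
  have e: "mat 1 + c *\<^sub>R (outer_H h ** B) = (\<chi> i j. (if i = j then 1 else 0) + u$i * w$j)"
    apply (simp add: vec_eq_iff mat_def matrix_matrix_mult_def outer_H_def u_def w_def)
    apply (simp add: scaleR_conv_of_real sum_distrib_left mult_ac)
    done
  have s: "(\<Sum>i\<in>UNIV. u$i * w$i) = of_real c * ip h (B *v h)"
    apply (simp add: u_def w_def ip_def matrix_vector_mult_def sum_distrib_left sum_distrib_right mult_ac)
    apply (rule sum.swap)
    done
  show ?thesis unfolding e det_rank1 s ..
qed

lemma A_solve:
  assumes "c \<ge> 0"
  shows "(mat 1 + c *\<^sub>R gram_sub H Y) *v (matrix_inv (mat 1 + c *\<^sub>R gram_sub H Y) *v h) = h"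
  by (simp add: matrix_vector_mul_assoc A_inv[OF assms])

lemma q_nonneg:
  assumes "c \<ge> 0"
  shows "Re (ip h (matrix_inv (mat 1 + c *\<^sub>R gram_sub H Y) *v h)) \<ge> 0"
proof -
  let ?A = "mat 1 + c *\<^sub>R gram_sub H Y"
  let ?u = "matrix_inv ?A *v h"
  have "ip h ?u = ip (?A *v ?u) ?u" using A_solve[OF assms, of H Y h] by simp
  also have "\<dots> = ip ?u (?A *v ?u)" using herm_ip[OF herm_A] by metis
  finally show ?thesis using A_psd[OF assms, of ?u H Y] ip_self_nonneg[of ?u] by simp
qed

lemma gram_split:
  assumes "Y \<subseteq> Y'"
  shows "gram_sub H Y' = gram_sub H Y + gram_sub H (Y' - Y)"
  unfolding gram_sub_def using sum.subset_diff[OF assms finite, of "\<lambda>k. outer_H (chan_col H k)"]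
  by (simp add: add.commute)

lemma q_mono:
  assumes c: "c \<ge> 0" and YY: "Y \<subseteq> Y'"
  shows "Re (ip h (matrix_inv (mat 1 + c *\<^sub>R gram_sub H Y') *v h))
       \<le> Re (ip h (matrix_inv (mat 1 + c *\<^sub>R gram_sub H Y) *v h))"
proof -
  let ?A = "mat 1 + c *\<^sub>R gram_sub H Y"
  let ?A' = "mat 1 + c *\<^sub>R gram_sub H Y'"
  let ?G = "gram_sub H (Y' - Y)"
  define u where "u = matrix_inv ?A *v h"
  define u' where "u' = matrix_inv ?A' *v h"
  have h1: "?A *v u = h" unfolding u_def by (rule A_solve[OF c])
  have A'eq: "?A' = ?A + c *\<^sub>R ?G"
    unfolding gram_split[OF YY, of H] by (simp add: scaleR_add_right add.assoc)
  have h2': "?A' *v u' = h" unfolding u'_def by (rule A_solve[OF c])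
  have "(?A + c *\<^sub>R ?G) *v u' = ?A *v u' + c *\<^sub>R (?G *v u')"
    by (simp only: matrix_vector_mult_add_rdistrib scaleR_mv)
  then have h2: "?A *v u' + c *\<^sub>R (?G *v u') = h"
    using h2' unfolding A'eq by simp
  have hA: "herm ?A" by (rule herm_A)
  have hG: "herm ?G" by (rule gram_herm)
  have q': "ip h u' = ip u h - of_real c * ip u (?G *v u')"
  proof -
    have "ip h u' = ip (?A *v u) u'" using h1 by simp
    also have "\<dots> = ip u (?A *v u')" using herm_ip[OF hA] by metis
    also have "?A *v u' = h - c *\<^sub>R (?G *v u')" using h2 by (simp add: algebra_simps)
    finally show ?thesis by (simp add: ip_diff_right ip_scaleR_right)
  qed
  have q: "ip u h = ip h u"
  proof -
    have "ip u h = ip u (?A *v u)" using h1 by simp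
    also have "\<dots> = ip (?A *v u) u" using herm_ip[OF hA] by metis
    finally show ?thesis using h1 by simp
  qed
  have E: "ip (u - u') (?A *v (u - u')) = of_real c * (ip u (?G *v u') - ip u' (?G *v u'))"
  proof -
    have "?A *v (u - u') = c *\<^sub>R (?G *v u')"
      using h1 h2 by (simp add: matrix_vector_mult_diff_distrib algebra_simps)
    then show ?thesis by (simp add: ip_scaleR_right ip_diff_left algebra_simps)
  qed
  have E0: "Re (ip (u - u') (?A *v (u - u'))) \<ge> 0"
    using A_psd[OF c, of "u - u'" H Y] ip_self_nonneg[of "u - u'"] by simp
  have G0: "Re (ip u' (?G *v u')) \<ge> 0" by (rule gram_psd)
  have "Re (ip h u) - Re (ip h u') = c * Re (ip u (?G *v u'))"
    using q q' by simp
  also have "\<dots> = Re (ip (u - u') (?A *v (u - u'))) + c * Re (ip u' (?G *v u'))"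
    unfolding E by (simp add: algebra_simps)
  also have "\<dots> \<ge> 0" using E0 G0 c by simp
  finally show ?thesis unfolding u_def u'_def by simp
qed

lemma rate_eq:
  "rate P N0 H x Y = log 2 (1 + (P / N0) * Re (ip (chan_col H x)
      (matrix_inv (mat 1 + (P / N0) *\<^sub>R gram_sub H Y) *v chan_col H x)))"
  unfolding rate_def det_formula by simp

lemma rate_antimono:
  assumes "P > 0" "N0 > 0" "Y \<subseteq> Y'"
  shows "rate P N0 H x Y' \<le> rate P N0 H x Y"
proof -
  have c: "P / N0 \<ge> 0" using assms by simp
  let ?q = "\<lambda>Y. Re (ip (chan_col H x) (matrix_inv (mat 1 + (P / N0) *\<^sub>R gram_sub H Y) *v chan_col H x))"
  define a where "a = ?q Y'"
  define b where "b = ?q Y"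
  have ab: "a \<le> b" unfolding a_def b_def by (rule q_mono[OF c assms(3)])
  have a0: "a \<ge> 0" unfolding a_def by (rule q_nonneg[OF c])
  have 1: "(P/N0) * a \<le> (P/N0) * b" by (rule mult_left_mono[OF ab c])
  have 2: "0 \<le> (P/N0) * a" by (rule mult_nonneg_nonneg[OF c a0])
  have "log 2 (1 + (P/N0) * a) \<le> log 2 (1 + (P/N0) * b)"
    using 1 2 by (subst log_le_cancel_iff) auto
  then show ?thesis unfolding rate_eq a_def b_def .
qed



lemma sic_take: "sic_decoded r R xs = take (length (sic_decoded r R xs)) xs"
  by (induction xs) auto

lemma sic_length_le: "length (sic_decoded r R xs) \<le> length xs"
  by (induction xs) auto

lemma sic_ok: "j < length (sic_decoded r R xs) \<Longrightarrow> r (xs!j) \<le> R (xs!j) (set (drop (Suc j) xs))"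
proof (induction xs arbitrary: j)
  case Nil
  then show ?case by simp
next
  case (Cons x xs)
  show ?case
  proof (cases "r x \<le> R x (set xs)")
    case True
    then show ?thesis using Cons by (cases j) auto
  next
    case False
    then show ?thesis using Cons.prems by simp
  qed
qed

lemma sic_len: "n \<le> length xs \<Longrightarrow> (\<forall>u<n. r (xs!u) \<le> R (xs!u) (set (drop (Suc u) xs)))
   \<Longrightarrow> n \<le> length (sic_decoded r R xs)"
proof (induction xs arbitrary: n)
  case Nil
  then show ?case by simp
next
  case (Cons x xs)
  show ?case
  proof (cases n)
    case 0
    then show ?thesis by simp
  next
    case (Suc m)
    have c: "r x \<le> R x (set xs)" using Cons.prems(2) Suc by force
    have "m \<le> length (sic_decoded r R xs)"
    proof (rule Cons.IH)
      show "m \<le> length xs" using Cons.prems(1) Suc by simp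
      show "\<forall>u<m. r (xs ! u) \<le> R (xs ! u) (set (drop (Suc u) xs))"
      proof (intro allI impI)
        fix u assume "u < m"
        then have "Suc u < n" using Suc by simp
        then show "r (xs ! u) \<le> R (xs ! u) (set (drop (Suc u) xs))"
          using Cons.prems(2) by fastforce
      qed
    qed
    then show ?thesis using c Suc by simp
  qed
qed

lemma card_S_SIC: "distinct xs \<Longrightarrow> card (S_SIC r R xs) = length (sic_decoded r R xs)"
  unfolding S_SIC_def
  by (metis distinct_card distinct_take sic_take)

lemma set_drop_order:
  assumes "distinct ord" "set ord = UNIV" "u < length ord"
  shows "set (drop (Suc u) ord) = UNIV - set (take u ord) - {ord!u}"
proof -
  have e: "ord = take u ord @ (ord!u) # drop (Suc u) ord"
    using assms(3) by (simp add: id_take_nth_drop)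
  have d: "distinct (take u ord @ (ord!u) # drop (Suc u) ord)" by (simp only: e[symmetric] assms(1))
  have "set (take u ord @ (ord!u) # drop (Suc u) ord) = UNIV" by (simp only: e[symmetric] assms(2))
  then show ?thesis using d by auto
qed

lemma greedy_opt:
  fixes R :: "'k::finite \<Rightarrow> 'k set \<Rightarrow> real"
  assumes anti: "\<And>x Y Y'. Y \<subseteq> Y' \<Longrightarrow> R x Y' \<le> R x Y"
    and rk: "\<forall>k. r k = rG"
    and g: "greedy_order R ord"
    and s: "is_order \<sigma>"
  shows "card (S_SIC r R \<sigma>) \<le> card (S_SIC r R ord)"
proof -
  have od: "distinct ord" "set ord = UNIV" using g unfolding greedy_order_def is_order_def by auto
  have sd: "distinct \<sigma>" "set \<sigma> = UNIV" using s unfolding is_order_def by auto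
  have gr: "\<forall>u < length ord. \<forall>k \<in> UNIV - set (take u ord).
        R k (UNIV - set (take u ord) - {k}) \<le> R (ord ! u) (UNIV - set (take u ord) - {ord ! u})"
    using g unfolding greedy_order_def by auto
  define s where "s = length (sic_decoded r R \<sigma>)"
  have lens: "length \<sigma> = length ord"
    using od sd by (metis distinct_card)
  have sle: "s \<le> length \<sigma>" unfolding s_def by (rule sic_length_le)
  have "s \<le> length (sic_decoded r R ord)"
  proof (rule sic_len)
    show "s \<le> length ord" using sle lens by simp
    show "\<forall>u<s. r (ord ! u) \<le> R (ord ! u) (set (drop (Suc u) ord))"
    proof (intro allI impI)
      fix u assume us: "u < s"
      have ul: "u < length ord" using us sle lens by simp
      define T where "T = set (take u ord)"
      have cT: "card T = u" unfolding T_def using od(1) ul by (simp add: distinct_card)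
      have cS: "card (set (take s \<sigma>)) = s" using sd(1) sle by (simp add: distinct_card)
      have "\<not> set (take s \<sigma>) \<subseteq> T"
      proof
        assume "set (take s \<sigma>) \<subseteq> T"
        then have "card (set (take s \<sigma>)) \<le> card T" by (rule card_mono[OF finite])
        then show False using cS cT us by simp
      qed
      then obtain y where "y \<in> set (take s \<sigma>)" "y \<notin> T" by blast
      then obtain j0 where j0: "j0 < s" "\<sigma>!j0 \<notin> T"
        using sle by (auto simp: in_set_conv_nth)
      define j where "j = (LEAST j. j < s \<and> \<sigma>!j \<notin> T)"
      have j: "j < s" "\<sigma>!j \<notin> T"
        using LeastI[of "\<lambda>j. j < s \<and> \<sigma>!j \<notin> T" j0] j0 unfolding j_def by auto
      have jmin: "\<sigma>!i \<in> T" if "i < j" for i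
        using not_less_Least[of i "\<lambda>j. j < s \<and> \<sigma>!j \<notin> T"] that j(1) unfolding j_def by auto
      define x where "x = \<sigma>!j"
      have sub: "UNIV - T - {x} \<subseteq> set (drop (Suc j) \<sigma>)"
      proof
        fix y assume y: "y \<in> UNIV - T - {x}"
        obtain i where i: "i < length \<sigma>" "\<sigma>!i = y"
          using sd(2) by (metis UNIV_I in_set_conv_nth)
        have "i \<noteq> j" using y i x_def by auto
        moreover have "\<not> i < j" using jmin y i by auto
        ultimately have "Suc j \<le> i" by simp
        then have a: "drop (Suc j) \<sigma> ! (i - Suc j) = \<sigma> ! i" and b: "i - Suc j < length (drop (Suc j) \<sigma>)"
          using i by auto
        show "y \<in> set (drop (Suc j) \<sigma>)"
          using nth_mem[OF b] a i(2) by simp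
      qed
      have "rG \<le> R x (set (drop (Suc j) \<sigma>))"
        using sic_ok[of j r R \<sigma>] j(1) rk unfolding s_def x_def by simp
      also have "\<dots> \<le> R x (UNIV - T - {x})" by (rule anti[OF sub])
      also have "\<dots> \<le> R (ord ! u) (UNIV - T - {ord ! u})"
        using gr ul j(2) unfolding T_def x_def by auto
      also have "UNIV - T - {ord ! u} = set (drop (Suc u) ord)"
        unfolding T_def using set_drop_order[OF od ul] by simp
      finally show "r (ord ! u) \<le> R (ord ! u) (set (drop (Suc u) ord))" using rk by simp
    qed
  qed
  then show ?thesis using card_S_SIC[OF od(1)] card_S_SIC[OF sd(1)] s_def by simp
qed


theorem mainTheorem2:
  fixes H :: "complex^'k::finite^'m::finite"
    and P N0 rG :: real
    and r :: "'k \<Rightarrow> real"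
    and ord :: "'k list"
  assumes "P > 0" and "N0 > 0"
    and "\<forall>k. r k = rG"
    and "greedy_order (rate P N0 H) ord"
  shows "\<forall>\<sigma>. is_order \<sigma> \<longrightarrow>
           card (S_SIC r (rate P N0 H) \<sigma>) \<le> card (S_SIC r (rate P N0 H) ord)"
proof (intro allI impI)
  fix \<sigma> :: "'k list"
  assume s: "is_order \<sigma>"
  show "card (S_SIC r (rate P N0 H) \<sigma>) \<le> card (S_SIC r (rate P N0 H) ord)"
    by (rule greedy_opt[OF rate_antimono[OF assms(1,2)] assms(3,4) s])
qed

end
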